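(* Let $k$ and $r$ be positive integers, let $G$ be a graph with $\chi(G)\le r$, and let $P\subset V(G)$. Suppose $|\mathcal{D}_G(P,3)|\le \frac{1}{2}k(k+1)$. Then for each precoloring $d\colon P\to[r+1]$ of $P$ in $G$, there exists a proper coloring $f\colon V(G)\to[r+k]$ of $G$ with $f(u)=d(u)$ for each $u\in P$.
   Context: For a graph $G$, $P\subset V(G)$ and a positive integer $k$, $\mathcal{D}_G(P,k)=\{\{x,y\}\subset P: x\ne y,\ d_G(x,y)\le k\}$, where $d_G$ is the distance in $G$. For a positive integer $m$, $[m]=\{1,\dots,m\}$. A precoloring of $P$ in $G$ is a proper coloring of the induced subgraph $G[P]$. *)

theory Defs
  imports Main
begin

definition graph :: "'a set \<Rightarrow> ('a \<Rightarrow> 'a \<Rightarrow> bool) \<Rightarrow> bool" where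
  "graph V E \<longleftrightarrow> finite V \<and> (\<forall>u v. E u v \<longrightarrow> u \<in> V \<and> v \<in> V)
     \<and> (\<forall>u v. E u v \<longrightarrow> E v u) \<and> (\<forall>u. \<not> E u u)"

inductive walk :: "('a \<Rightarrow> 'a \<Rightarrow> bool) \<Rightarrow> 'a \<Rightarrow> 'a \<Rightarrow> nat \<Rightarrow> bool" for E where
  walk_refl: "walk E x x 0"
| walk_step: "E x y \<Longrightarrow> walk E y z n \<Longrightarrow> walk E x z (Suc n)"

definition dist_le :: "('a \<Rightarrow> 'a \<Rightarrow> bool) \<Rightarrow> 'a \<Rightarrow> 'a \<Rightarrow> nat \<Rightarrow> bool" where
  "dist_le E x y k \<longleftrightarrow> (\<exists>n\<le>k. walk E x y n)"

definition close_pairs :: "('a \<Rightarrow> 'a \<Rightarrow> bool) \<Rightarrow> 'a set \<Rightarrow> nat \<Rightarrow> 'a set set" where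
  "close_pairs E P k = {{x, y} | x y. x \<in> P \<and> y \<in> P \<and> x \<noteq> y \<and> dist_le E x y k}"

definition proper_coloring_on ::
  "'a set \<Rightarrow> ('a \<Rightarrow> 'a \<Rightarrow> bool) \<Rightarrow> ('a \<Rightarrow> nat) \<Rightarrow> nat set \<Rightarrow> bool" where
  "proper_coloring_on S E f C \<longleftrightarrow> (\<forall>v\<in>S. f v \<in> C) \<and> (\<forall>u\<in>S. \<forall>v\<in>S. E u v \<longrightarrow> f u \<noteq> f v)"

definition chromatic_le :: "'a set \<Rightarrow> ('a \<Rightarrow> 'a \<Rightarrow> bool) \<Rightarrow> nat \<Rightarrow> bool" where
  "chromatic_le V E r \<longleftrightarrow> (\<exists>f. proper_coloring_on V E f {1..r})"

end

theory Submission
  imports Defs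
begin


lemma cp_mem: "{a,b} \<in> close_pairs E P k \<Longrightarrow> a \<in> P \<and> b \<in> P \<and> a \<noteq> b"
  unfolding close_pairs_def by (auto simp: doubleton_eq_iff)

lemma cp_mem2: "X \<in> close_pairs E P k \<Longrightarrow> X \<subseteq> P"
  unfolding close_pairs_def by auto

lemma cp_fin: "finite P \<Longrightarrow> finite (close_pairs E P k)"
proof -
  assume "finite P"
  moreover have "close_pairs E P k \<subseteq> Pow P" using cp_mem2 by blast
  ultimately show ?thesis by (meson finite_Pow_iff finite_subset)
qed

lemma cp_mono: "Q \<subseteq> P \<Longrightarrow> close_pairs E Q k \<subseteq> close_pairs E P k"
  unfolding close_pairs_def by blast

lemma close3: "u \<in> P \<Longrightarrow> w \<in> P \<Longrightarrow> u \<noteq> w \<Longrightarrow> E u v \<Longrightarrow> E v v' \<Longrightarrow> E v' w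
   \<Longrightarrow> {u,w} \<in> close_pairs E P 3"
proof -
  assume a: "u \<in> P" "w \<in> P" "u \<noteq> w" "E u v" "E v v'" "E v' w"
  have "walk E u w 3" using a
    by (metis numeral_3_eq_3 walk.simps)
  hence "dist_le E u w 3" unfolding dist_le_def by blast
  thus ?thesis using a unfolding close_pairs_def by blast
qed

lemma close2: "u \<in> P \<Longrightarrow> w \<in> P \<Longrightarrow> u \<noteq> w \<Longrightarrow> E u v \<Longrightarrow> E v w
   \<Longrightarrow> {u,w} \<in> close_pairs E P 3"
proof -
  assume a: "u \<in> P" "w \<in> P" "u \<noteq> w" "E u v" "E v w"
  have "walk E u w 2" using a
    by (metis numeral_2_eq_2 walk.simps)
  hence "dist_le E u w 3" unfolding dist_le_def by (intro exI[of _ 2]) auto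
  thus ?thesis using a unfolding close_pairs_def by blast
qed

lemma card_remove:
  assumes "finite P"
  shows "card (close_pairs E (P-{u}) 3) + card {w\<in>P. {u,w} \<in> close_pairs E P 3} \<le> card (close_pairs E P 3)"
proof -
  let ?A = "close_pairs E (P-{u}) 3"
  let ?S = "{w\<in>P. {u,w} \<in> close_pairs E P 3}"
  let ?B = "(\<lambda>w. {u,w}) ` ?S"
  have fD: "finite (close_pairs E P 3)" using cp_fin assms by blast
  have AD: "?A \<subseteq> close_pairs E P 3" by (rule cp_mono) blast
  have BD: "?B \<subseteq> close_pairs E P 3" by blast
  have dis: "?A \<inter> ?B = {}" using cp_mem2 by fastforce
  have inj: "inj_on (\<lambda>w. {u,w}) ?S" unfolding inj_on_def by (auto simp: doubleton_eq_iff)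
  have "card ?B = card ?S" using card_image[OF inj] .
  moreover have "card (?A \<union> ?B) = card ?A + card ?B"
    by (rule card_Un_disjoint) (use fD AD BD finite_subset dis in auto)
  moreover have "card (?A \<union> ?B) \<le> card (close_pairs E P 3)"
    using AD BD fD by (intro card_mono) auto
  ultimately show ?thesis by linarith
qed

lemma greedy:
  fixes N :: "'a \<Rightarrow> 'a set" and h :: "'a \<Rightarrow> nat"
  assumes "finite S" "finite Pal" "\<forall>x\<in>S. card (N x) < card Pal" "\<forall>x. finite (N x)"
    "\<forall>a b. a \<in> N b \<longleftrightarrow> b \<in> N a" "\<forall>a. a \<notin> N a"
  shows "\<exists>g. (\<forall>x\<in>S. g x \<in> Pal) \<and> (\<forall>x\<in>S. \<forall>y\<in>N x. g x \<noteq> g y) \<and> (\<forall>x. x \<notin> S \<longrightarrow> g x = h x)"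
  using assms(1,3)
proof (induction S rule: finite_induct)
  case empty
  show ?case by (rule exI[of _ h]) auto
next
  case (insert x S)
  then obtain g where g: "\<forall>x\<in>S. g x \<in> Pal" "\<forall>x\<in>S. \<forall>y\<in>N x. g x \<noteq> g y" "\<forall>x. x \<notin> S \<longrightarrow> g x = h x"
    by auto
  have "card (g ` N x) < card Pal" using insert(4) card_image_le[OF assms(4)[rule_format, of x], of g]
    by auto
  hence "\<not> Pal \<subseteq> g ` N x" using card_mono assms(4) by (metis finite_imageI leD)
  then obtain col where col: "col \<in> Pal" "col \<notin> g ` N x" by blast
  let ?g = "g(x := col)"
  have "\<forall>y\<in>insert x S. ?g y \<in> Pal" using g col insert(2) by auto
  moreover have "\<forall>z\<in>insert x S. \<forall>y\<in>N z. ?g z \<noteq> ?g y"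
  proof (intro ballI)
    fix z y assume z: "z \<in> insert x S" and y: "y \<in> N z"
    show "?g z \<noteq> ?g y"
    proof (cases "z = x")
      case True
      then have "y \<noteq> x" using y assms(6) by auto
      then show ?thesis using True y col by auto
    next
      case False
      then have zS: "z \<in> S" using z by auto
      show ?thesis
      proof (cases "y = x")
        case True
        then have "z \<in> N x" using y assms(5) by auto
        then show ?thesis using True False col by auto
      next
        case False
        then show ?thesis using g zS y \<open>z \<noteq> x\<close> by auto
      qed
    qed
  qed
  moreover have "\<forall>y. y \<notin> insert x S \<longrightarrow> ?g y = h y" using g by auto
  ultimately show ?case by blast
qed



lemma graphD: assumes "graph V E"
  shows "finite V" "E a b \<Longrightarrow> a \<in> V" "E a b \<Longrightarrow> b \<in> V" "E a b \<Longrightarrow> E b a" "\<not> E a a"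
  using assms unfolding graph_def by auto

lemma core:
  assumes G: "graph V E" and PV: "P \<subseteq> V"
    and C: "proper_coloring_on V E c {1..r}" and dP: "proper_coloring_on P E d {1..r+1}"
    and k: "k > 0"
    and gr: "\<forall>u\<in>P. g u \<in> {r+1..r+k}"
    and A: "\<And>w w' v v'. w \<in> P \<Longrightarrow> w' \<in> P \<Longrightarrow> w \<noteq> w' \<Longrightarrow> v \<notin> P \<Longrightarrow> v' \<notin> P \<Longrightarrow> E w v \<Longrightarrow> E w' v'
         \<Longrightarrow> c v = d w \<Longrightarrow> c v' = d w' \<Longrightarrow> E v v' \<Longrightarrow> g w \<noteq> g w'"
    and B: "\<And>w p v. w \<in> P \<Longrightarrow> p \<in> P \<Longrightarrow> v \<notin> P \<Longrightarrow> E w v \<Longrightarrow> c v = d w \<Longrightarrow> E v p \<Longrightarrow> g w \<noteq> d p"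
  shows "\<exists>f. proper_coloring_on V E f {1..r+k} \<and> (\<forall>u\<in>P. f u = d u)"
proof -
  define f where "f v = (if v \<in> P then d v else if (\<exists>w\<in>P. E w v \<and> c v = d w)
      then g (SOME w. w\<in>P \<and> E w v \<and> c v = d w) else c v)" for v
  have fw: "\<exists>w'. w'\<in>P \<and> E w' v \<and> c v = d w' \<and> f v = g w'"
    if "v \<notin> P" "w\<in>P" "E w v" "c v = d w" for v w
  proof -
    have ex: "\<exists>w. w\<in>P \<and> E w v \<and> c v = d w" using that by blast
    have "f v = g (SOME w. w\<in>P \<and> E w v \<and> c v = d w)" using that(1) ex unfolding f_def by auto
    thus ?thesis using someI_ex[OF ex] by blast
  qed
  have fn: "f v = c v" if "v \<notin> P" "\<not>(\<exists>w\<in>P. E w v \<and> c v = d w)" for v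
    using that unfolding f_def by auto
  have fP: "f v = d v" if "v \<in> P" for v using that unfolding f_def by simp
  have cV: "c v \<in> {1..r}" if "v \<in> V" for v using C that unfolding proper_coloring_on_def by auto
  have cE: "c a \<noteq> c b" if "a \<in> V" "b \<in> V" "E a b" for a b using C that unfolding proper_coloring_on_def by auto
  have dV: "d v \<in> {1..r+1}" if "v \<in> P" for v using dP that unfolding proper_coloring_on_def by auto
  have dE: "d a \<noteq> d b" if "a \<in> P" "b \<in> P" "E a b" for a b using dP that unfolding proper_coloring_on_def by auto
  have range: "f v \<in> {1..r+k}" if "v \<in> V" for v
  proof (cases "v \<in> P")
    case True then show ?thesis using dV[of v] k fP[of v] by auto
  next
    case False
    show ?thesis
    proof (cases "\<exists>w\<in>P. E w v \<and> c v = d w")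
      case True
      then obtain w where w: "w\<in>P" "E w v" "c v = d w" by blast
      obtain w' where "w' \<in> P" "f v = g w'" using fw[OF False w] by blast
      then show ?thesis using gr[rule_format, of w'] by simp
    next
      case F2: False
      then show ?thesis using fn[OF False F2] cV[OF that] k by auto
    qed
  qed
  have mixed: "f a \<noteq> f b" if H: "a \<in> P" "b \<notin> P" "E a b" for a b
  proof (cases "\<exists>w\<in>P. E w b \<and> c b = d w")
    case True
    then obtain w where w: "w\<in>P" "E w b" "c b = d w" by blast
    obtain w' where w': "w' \<in> P" "E w' b" "c b = d w'" "f b = g w'" using fw[OF H(2) w] by blast
    have "g w' \<noteq> d a" using B[OF w'(1) H(1,2) w'(2,3) graphD(4)[OF G H(3)]] .
    then show ?thesis using w' H fP by auto
  next
    case False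
    then have "c b \<noteq> d a" using H by auto
    then show ?thesis using fn[OF H(2) False] H fP by auto
  qed
  have propr: "f a \<noteq> f b" if H: "a \<in> V" "b \<in> V" "E a b" for a b
  proof -
    have Eba: "E b a" using graphD(4)[OF G H(3)] .
    consider "a \<in> P" "b \<in> P" | "a \<in> P" "b \<notin> P" | "a \<notin> P" "b \<in> P" | "a \<notin> P" "b \<notin> P" by blast
    then show ?thesis
    proof cases
      case 1 then show ?thesis using dE H fP by auto
    next
      case 2 then show ?thesis using mixed H by blast
    next
      case 3 then show ?thesis using mixed[of b a] Eba by auto
    next
      case 4
      show ?thesis
      proof (cases "\<exists>w\<in>P. E w a \<and> c a = d w")
        case Ta: True
        then obtain w where w: "w\<in>P" "E w a" "c a = d w" by blast
        obtain w1 where w1: "w1 \<in> P" "E w1 a" "c a = d w1" "f a = g w1" using fw[OF 4(1) w] by blast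
        show ?thesis
        proof (cases "\<exists>w\<in>P. E w b \<and> c b = d w")
          case True
          then obtain w where w: "w\<in>P" "E w b" "c b = d w" by blast
          obtain w2 where w2: "w2 \<in> P" "E w2 b" "c b = d w2" "f b = g w2" using fw[OF 4(2) w] by blast
          have "w1 \<noteq> w2" using cE[OF H] w1 w2 by auto
          then show ?thesis using A[OF w1(1) w2(1) _ 4 w1(2) w2(2) w1(3) w2(3) H(3)] w1 w2 by auto
        next
          case False
          then show ?thesis using fn[OF 4(2) False] cV[OF H(2)] w1 gr[rule_format, of w1] by simp
        qed
      next
        case Fa: False
        show ?thesis
        proof (cases "\<exists>w\<in>P. E w b \<and> c b = d w")
          case True
          then obtain w where w: "w\<in>P" "E w b" "c b = d w" by blast
          obtain w2 where w2: "w2 \<in> P" "E w2 b" "c b = d w2" "f b = g w2" using fw[OF 4(2) w] by blast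
          then show ?thesis using fn[OF 4(1) Fa] cV[OF H(1)] w2 gr[rule_format, of w2] by simp
        next
          case False
          then show ?thesis using fn[OF 4(1) Fa] fn[OF 4(2) False] cE[OF H] by auto
        qed
      qed
    qed
  qed
  have "proper_coloring_on V E f {1..r+k}" unfolding proper_coloring_on_def using range propr by blast
  moreover have "\<forall>u\<in>P. f u = d u" using fP by blast
  ultimately show ?thesis by blast
qed



lemma extend_step:
  assumes G: "graph V E" and PV: "P \<subseteq> V" and u: "u \<in> P"
    and dP: "proper_coloring_on P E d {1..r+1}"
    and f': "proper_coloring_on V E f' {1..r+n}" and fd: "\<forall>v\<in>P-{u}. f' v = d v"
    and rn: "r+1 \<le> r+n"
  shows "\<exists>f. proper_coloring_on V E f {1..r+Suc n} \<and> (\<forall>v\<in>P. f v = d v)"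
proof -
  define R where "R = r + Suc n"
  define f where "f v = (if v = u then d u else if v \<notin> P \<and> E u v \<and> f' v = d u then R else f' v)" for v
  have f'V: "f' v \<in> {1..r+n}" if "v \<in> V" for v using f' that unfolding proper_coloring_on_def by auto
  have f'E: "f' a \<noteq> f' b" if "a \<in> V" "b \<in> V" "E a b" for a b using f' that unfolding proper_coloring_on_def by auto
  have dV: "d v \<in> {1..r+1}" if "v \<in> P" for v using dP that unfolding proper_coloring_on_def by auto
  have dE: "d a \<noteq> d b" if "a \<in> P" "b \<in> P" "E a b" for a b using dP that unfolding proper_coloring_on_def by auto
  have fu: "f u \<noteq> f b" if H: "b \<in> V" "E u b" for b
  proof -
    have "b \<noteq> u" using graphD(5)[OF G] H by auto
    show ?thesis
    proof (cases "b \<in> P")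
      case True
      then show ?thesis using dE[OF u True H(2)] fd \<open>b \<noteq> u\<close> unfolding f_def by auto
    next
      case False
      then show ?thesis using H \<open>b \<noteq> u\<close> dV[OF u] rn unfolding f_def R_def by auto
    qed
  qed
  have range: "f v \<in> {1..R}" if "v \<in> V" for v
    using f'V[OF that] dV[OF u] rn unfolding f_def R_def by auto
  have propr: "f a \<noteq> f b" if H: "a \<in> V" "b \<in> V" "E a b" for a b
  proof -
    consider "a = u" | "b = u" | "a \<noteq> u" "b \<noteq> u" by blast
    then show ?thesis
    proof cases
      case 1 then show ?thesis using fu H by auto
    next
      case 2 then show ?thesis using fu[of a] H graphD(4)[OF G H(3)] by auto
    next
      case 3
      have "f' a \<noteq> f' b" using f'E[OF H] .
      then show ?thesis using 3 f'V[OF H(1)] f'V[OF H(2)] unfolding f_def R_def by auto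
    qed
  qed
  have "\<forall>v\<in>P. f v = d v" using fd unfolding f_def by auto
  then show ?thesis using range propr unfolding proper_coloring_on_def R_def by blast
qed

lemma greedy_case:
  assumes G: "graph V E" and PV: "P \<subseteq> V"
    and C: "proper_coloring_on V E c {1..r}" and dP: "proper_coloring_on P E d {1..r+1}"
    and k: "k > 0"
    and deg: "\<forall>u\<in>P. card {w\<in>P. {u,w} \<in> close_pairs E P 3} \<le> k - 1"
  shows "\<exists>f. proper_coloring_on V E f {1..r+k} \<and> (\<forall>u\<in>P. f u = d u)"
proof -
  define D where "D = close_pairs E P 3"
  define N where "N u = {w\<in>P. {u,w} \<in> D}" for u
  define S where "S = {u\<in>P. d u \<noteq> r+1}"
  have finP: "finite P" using graphD(1)[OF G] PV finite_subset by blast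
  have "\<exists>g. (\<forall>x\<in>S. g x \<in> {r+1..r+k}) \<and> (\<forall>x\<in>S. \<forall>y\<in>N x. g x \<noteq> g y) \<and> (\<forall>x. x \<notin> S \<longrightarrow> g x = (\<lambda>_. r+1) x)"
  proof (rule greedy)
    show "finite S" using finP unfolding S_def by auto
    show "finite {r+1..r+k}" by simp
    have ck: "card {r+1..r+k} = k" by simp
    have "\<forall>x\<in>S. card (N x) \<le> k - 1" using deg unfolding S_def N_def D_def by auto
    then show "\<forall>x\<in>S. card (N x) < card {r+1..r+k}" using k ck by auto
    show "\<forall>x. finite (N x)" using finP unfolding N_def by auto
    show "\<forall>a b. a \<in> N b \<longleftrightarrow> b \<in> N a" unfolding N_def D_def by (auto simp: insert_commute dest: cp_mem)
    show "\<forall>a. a \<notin> N a" unfolding N_def D_def using cp_mem by fastforce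
  qed
  then obtain g where g: "\<forall>x\<in>S. g x \<in> {r+1..r+k}" "\<forall>x\<in>S. \<forall>y\<in>N x. g x \<noteq> g y" "\<forall>x. x \<notin> S \<longrightarrow> g x = r+1"
    by auto
  have cV: "c v \<in> {1..r}" if "v \<in> V" for v using C that unfolding proper_coloring_on_def by auto
  have dV: "d v \<in> {1..r+1}" if "v \<in> P" for v using dP that unfolding proper_coloring_on_def by auto
  show ?thesis
  proof (rule core[OF G PV C dP k])
    show "\<forall>u\<in>P. g u \<in> {r+1..r+k}"
    proof
      fix u assume "u \<in> P"
      show "g u \<in> {r+1..r+k}"
      proof (cases "u \<in> S")
        case True then show ?thesis using g(1) by blast
      next
        case False then show ?thesis using g(3) k by auto
      qed
    qed
  next
    fix w w' v v'
    assume H: "w \<in> P" "w' \<in> P" "w \<noteq> w'" "v \<notin> P" "v' \<notin> P" "E w v" "E w' v'" "c v = d w" "c v' = d w'" "E v v'"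
    have "v \<in> V" "v' \<in> V" using graphD(3)[OF G] H by auto
    then have "w \<in> S" "w' \<in> S" using cV H unfolding S_def by fastforce+
    moreover have "w' \<in> N w" using close3[OF H(1,2,3,6,10) graphD(4)[OF G H(7)]] H unfolding N_def D_def by auto
    ultimately show "g w \<noteq> g w'" using g by auto
  next
    fix w p v
    assume H: "w \<in> P" "p \<in> P" "v \<notin> P" "E w v" "c v = d w" "E v p"
    have "v \<in> V" using graphD(3)[OF G] H by auto
    then have wS: "w \<in> S" and dw: "d w \<le> r" using cV H unfolding S_def by fastforce+
    show "g w \<noteq> d p"
    proof (cases "d p = r+1")
      case True
      then have "p \<noteq> w" using dw by auto
      then have "p \<in> N w" using close2[OF H(1,2) _ H(4,6)] H unfolding N_def D_def by auto
      moreover have "p \<notin> S" using True unfolding S_def by auto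
      ultimately show ?thesis using g wS True by metis
    next
      case False
      then have "d p \<le> r" using dV[OF H(2)] by auto
      then show ?thesis using g wS by fastforce
    qed
  qed
qed



definition sw :: "nat \<Rightarrow> nat \<Rightarrow> nat \<Rightarrow> nat" where
  "sw a b i = (if i = a then b else if i = b then a else i)"

lemma sw_inj: "sw a b x = sw a b y \<longleftrightarrow> x = y" by (auto simp: sw_def)

lemma sw_rng: "a \<in> A \<Longrightarrow> b \<in> A \<Longrightarrow> x \<in> A \<Longrightarrow> sw a b x \<in> A" by (auto simp: sw_def)

lemma recolor:
  assumes C: "proper_coloring_on V E c {1..r}" and a: "a \<in> {1..r}" and b: "b \<in> {1..r}"
  shows "proper_coloring_on V E (sw a b \<circ> c) {1..r}" "(sw a b \<circ> c) x = b \<longleftrightarrow> c x = a"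
proof -
  show "proper_coloring_on V E (sw a b \<circ> c) {1..r}"
    using C sw_inj[of a b] sw_rng[OF a b] unfolding proper_coloring_on_def comp_def by metis
  show "(sw a b \<circ> c) x = b \<longleftrightarrow> c x = a" by (auto simp: sw_def)
qed

lemma special_case:
  assumes G: "graph V E" and PV: "P \<subseteq> V"
    and C: "proper_coloring_on V E c {1..r}" and dP: "proper_coloring_on P E d {1..r+1}"
    and u: "u \<in> P" and w: "w \<in> P" and DD: "close_pairs E P 3 \<subseteq> {{u,w}}"
  shows "\<exists>f. proper_coloring_on V E f {1..r+1} \<and> (\<forall>v\<in>P. f v = d v)"
proof -
  have cV: "c v \<in> {1..r}" if "v \<in> V" for v using C that unfolding proper_coloring_on_def by auto
  have dV: "d v \<in> {1..r+1}" if "v \<in> P" for v using dP that unfolding proper_coloring_on_def by auto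
  have cE: "c a \<noteq> c b" if "a \<in> V" "b \<in> V" "E a b" for a b using C that unfolding proper_coloring_on_def by auto
  have Zc: "\<forall>v. E x v \<longrightarrow> c2 v \<noteq> d x" if "proper_coloring_on V E c2 {1..r}" "x \<in> P" "c2 x = d x" for x c2
    using that PV graphD(3)[OF G] unfolding proper_coloring_on_def by (metis graphD(2)[OF G] subsetD)
  have "\<exists>c2. proper_coloring_on V E c2 {1..r} \<and>
     (((\<forall>v. E u v \<longrightarrow> c2 v \<noteq> d u) \<and> ((\<forall>v. E w v \<longrightarrow> c2 v \<noteq> d w) \<or> d u \<le> r)) \<or>
      ((\<forall>v. E w v \<longrightarrow> c2 v \<noteq> d w) \<and> ((\<forall>v. E u v \<longrightarrow> c2 v \<noteq> d u) \<or> d w \<le> r)))"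
  proof (cases "d u \<le> r")
    case True
    let ?c2 = "sw (c u) (d u) \<circ> c"
    have p: "proper_coloring_on V E ?c2 {1..r}" using recolor(1)[OF C cV[of u]] u PV dV[OF u] True by auto
    have "?c2 u = d u" using recolor(2)[OF C cV[of u], of "d u" u] u PV dV[OF u] True by auto
    then show ?thesis using Zc[OF p u] p True by blast
  next
    case F1: False
    show ?thesis
    proof (cases "d w \<le> r")
      case True
      let ?c2 = "sw (c w) (d w) \<circ> c"
      have p: "proper_coloring_on V E ?c2 {1..r}" using recolor(1)[OF C cV[of w]] w PV dV[OF w] True by auto
      have "?c2 w = d w" using recolor(2)[OF C cV[of w], of "d w" w] w PV dV[OF w] True by auto
      then show ?thesis using Zc[OF p w] p True by blast
    next
      case False
      have "\<forall>v. E u v \<longrightarrow> c v \<noteq> d u" "\<forall>v. E w v \<longrightarrow> c v \<noteq> d w"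
        using F1 False cV graphD(3)[OF G] by fastforce+
      then show ?thesis using C by blast
    qed
  qed
  then obtain c2 where c2: "proper_coloring_on V E c2 {1..r}" and
    Z: "((\<forall>v. E u v \<longrightarrow> c2 v \<noteq> d u) \<and> ((\<forall>v. E w v \<longrightarrow> c2 v \<noteq> d w) \<or> d u \<le> r)) \<or>
      ((\<forall>v. E w v \<longrightarrow> c2 v \<noteq> d w) \<and> ((\<forall>v. E u v \<longrightarrow> c2 v \<noteq> d u) \<or> d w \<le> r))" by blast
  have c2V: "c2 v \<in> {1..r}" if "v \<in> V" for v using c2 that unfolding proper_coloring_on_def by auto
  have "\<exists>f. proper_coloring_on V E f {1..r+1} \<and> (\<forall>v\<in>P. f v = d v)"
  proof (rule core[OF G PV c2 dP, of 1 "\<lambda>_. r+1"])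
    show "(0::nat) < 1" by simp
    show "\<forall>u\<in>P. r + 1 \<in> {r+1..r+1}" by simp
  next
    fix w1 w2 v v'
    assume H: "w1 \<in> P" "w2 \<in> P" "w1 \<noteq> w2" "v \<notin> P" "v' \<notin> P" "E w1 v" "E w2 v'" "c2 v = d w1" "c2 v' = d w2" "E v v'"
    have "{w1,w2} \<in> close_pairs E P 3" using close3[OF H(1,2,3,6,10) graphD(4)[OF G H(7)]] .
    then have "{w1,w2} = {u,w}" using DD by auto
    then have "(w1 = u \<and> w2 = w) \<or> (w1 = w \<and> w2 = u)" by (auto simp: doubleton_eq_iff)
    then have False using Z H by metis
    then show "r + 1 \<noteq> r + 1" ..
  next
    fix w1 p v
    assume H: "w1 \<in> P" "p \<in> P" "v \<notin> P" "E w1 v" "c2 v = d w1" "E v p"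
    show "r + 1 \<noteq> d p"
    proof
      assume dp: "r + 1 = d p"
      have "v \<in> V" using graphD(3)[OF G H(4)] .
      then have "d w1 \<le> r" using c2V H by fastforce
      then have "w1 \<noteq> p" using dp by auto
      have "{w1,p} \<in> close_pairs E P 3" using close2[OF H(1,2) \<open>w1 \<noteq> p\<close> H(4,6)] .
      then have "{w1,p} = {u,w}" using DD by auto
      then have "(w1 = u \<and> p = w) \<or> (w1 = w \<and> p = u)" by (auto simp: doubleton_eq_iff)
      then show False using Z H dp by (metis add_le_same_cancel1 not_one_le_zero)
    qed
  qed
  then show ?thesis .
qed



lemma arith_aux: "(a::nat) + b \<le> D \<Longrightarrow> s \<le> b \<Longrightarrow> 2 * D \<le> X + 2 * s \<Longrightarrow> 2 * a \<le> X"
  by linarith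

lemma main:
  assumes G: "graph V E" and C: "proper_coloring_on V E c {1..r}"
  shows "0 < k \<Longrightarrow> P \<subseteq> V \<Longrightarrow> 2 * card (close_pairs E P 3) \<le> k * (k + 1)
    \<Longrightarrow> proper_coloring_on P E d {1..r+1}
    \<Longrightarrow> \<exists>f. proper_coloring_on V E f {1..r+k} \<and> (\<forall>u\<in>P. f u = d u)"
proof (induction k arbitrary: P)
  case 0 thus ?case by simp
next
  case (Suc n)
  have finP: "finite P" using graphD(1)[OF G] Suc.prems(2) finite_subset by blast
  show ?case
  proof (cases "\<forall>u\<in>P. card {w\<in>P. {u,w} \<in> close_pairs E P 3} \<le> Suc n - 1")
    case True
    then show ?thesis using greedy_case[OF G Suc.prems(2) C Suc.prems(4)] by blast
  next
    case False
    then obtain u where u: "u \<in> P" and dg0: "\<not> card {w\<in>P. {u,w} \<in> close_pairs E P 3} \<le> Suc n - 1" by blast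
    have dg: "card {w\<in>P. {u,w} \<in> close_pairs E P 3} \<ge> Suc n" using dg0 by simp
    show ?thesis
    proof (cases "n = 0")
      case True
      have "{w\<in>P. {u,w} \<in> close_pairs E P 3} \<noteq> {}" using dg by (intro notI) simp
      then obtain w where w: "w \<in> P" "{u,w} \<in> close_pairs E P 3" by blast
      have fD: "finite (close_pairs E P 3)" using cp_fin finP by blast
      have "card (close_pairs E P 3) \<le> Suc 0" using Suc.prems(3) True by simp
      then have "\<forall>a\<in>close_pairs E P 3. \<forall>b\<in>close_pairs E P 3. a = b" using card_le_Suc0_iff_eq[OF fD] by simp
      then have "close_pairs E P 3 \<subseteq> {{u,w}}" using w(2) by (intro subsetI) auto
      then have ex: "\<exists>f. proper_coloring_on V E f {1..r+1} \<and> (\<forall>v\<in>P. f v = d v)"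
        using special_case[OF G Suc.prems(2) C Suc.prems(4) u w(1)] by blast
      have "r + Suc n = r + 1" using True by simp
      then show ?thesis using ex by metis
    next
      case False
      have cr: "card (close_pairs E (P-{u}) 3) + card {w\<in>P. {u,w} \<in> close_pairs E P 3} \<le> card (close_pairs E P 3)"
        using card_remove[OF finP] .
      have "2 * card (close_pairs E (P-{u}) 3) \<le> n * (n + 1)"
      proof -
        have e: "Suc n * (Suc n + 1) = n * (n + 1) + 2 * Suc n" by (simp add: algebra_simps)
        show ?thesis using arith_aux[OF cr dg] Suc.prems(3) unfolding e by blast
      qed
      moreover have "proper_coloring_on (P-{u}) E d {1..r+1}" using Suc.prems(4) unfolding proper_coloring_on_def by blast
      moreover have "P - {u} \<subseteq> V" using Suc.prems(2) by blast
      moreover have "0 < n" using False by simp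
      ultimately have "\<exists>f. proper_coloring_on V E f {1..r+n} \<and> (\<forall>v\<in>P-{u}. f v = d v)"
        using Suc.IH by blast
      then obtain f' where f': "proper_coloring_on V E f' {1..r+n}" "\<forall>v\<in>P-{u}. f' v = d v" by blast
      show ?thesis using extend_step[OF G Suc.prems(2) u Suc.prems(4) f'] False by simp
    qed
  qed
qed

theorem theorem1:
  fixes V :: "'a set" and E :: "'a \<Rightarrow> 'a \<Rightarrow> bool" and P :: "'a set"
    and k r :: nat and d :: "'a \<Rightarrow> nat"
  assumes "graph V E"
    and "k > 0" and "r > 0"
    and "chromatic_le V E r"
    and "P \<subseteq> V"
    and "2 * card (close_pairs E P 3) \<le> k * (k + 1)"
    and "proper_coloring_on P E d {1..r+1}"
  shows "\<exists>f. proper_coloring_on V E f {1..r+k} \<and> (\<forall>u\<in>P. f u = d u)"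
proof -
  obtain c where c: "proper_coloring_on V E c {1..r}" using assms(4) unfolding chromatic_le_def by blast
  show ?thesis using main[OF assms(1) c, OF assms(2) assms(5) assms(6) assms(7)] .
qed

end
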